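(* Let $G \leq S_n$, and let $G \wr S_2$ be the wreath product of $G$ with the symmetric group $S_2$. Then \[ i(P(G \wr S_2),t) = \sum_{k=0}^{t} \big(i(P(G),k)\big)^2 \cdot \big(i(P(G),t-k)\big)^2 \] for any integer $t \geq 2$.
   Context: Permutations in $S_n$ are identified with $n \times n$ permutation matrices ($g$ corresponds to the matrix with $(i,j)$-entry $1$ if $g(i)=j$ and $0$ otherwise). For a subgroup $G \leq S_n$, the permutation polytope is $P(G) = \mathrm{conv}\{g : g \in G\}$. For a lattice polytope $P \subset \mathbb{R}^N$, its Ehrhart polynomial $i(P,t)$ counts the number of integer points in the dilation $tP = \{tX : X \in P\}$. The wreath product $G \wr S_2$ is the group $\{(g,h) : g \in G^2, h \in S_2\}$ with multiplication $((g'_1,g'_2),h')\cdot((g_1,g_2),h) = ((g'_{h'(1)}g_1, g'_{h'(2)}g_2), h'h)$; as a permutation group on $2n$ points, the vertices of $P(G \wr S_2)$ are the $2n \times 2n$ block matrices $\begin{pmatrix} X_1 & 0 \\ 0 & X_2\end{pmatrix}$ and $\begin{pmatrix} 0 & X_1 \\ X_2 & 0\end{pmatrix}$ with $X_1, X_2$ vertices of $P(G)$. *)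

theory Defs
  imports "HOL-Analysis.Analysis" "HOL-Algebra.Bij"
begin

text \<open>Permutations of the finite point set 'n (of size n) play the role of S_n.
  The permutation matrix of g has (i,j)-entry 1 iff g i = j.\<close>
definition perm_mat :: "('n::finite \<Rightarrow> 'n) \<Rightarrow> real ^ 'n ^ 'n" where
  "perm_mat g = (\<chi> i j. if g i = j then 1 else 0)"

definition perm_polytope :: "('n::finite \<Rightarrow> 'n) set \<Rightarrow> (real ^ 'n ^ 'n) set" where
  "perm_polytope G = convex hull (perm_mat ` G)"

definition ehrhart :: "'a::euclidean_space set \<Rightarrow> nat \<Rightarrow> nat" where
  "ehrhart P t = card {x \<in> (\<lambda>y. real t *\<^sub>R y) ` P. \<forall>b\<in>Basis. x \<bullet> b \<in> \<int>}"

text \<open>The wreath product G wr S_2 as a permutation group on the 2n points 'n + 'n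
  (Inl = first block, Inr = second block): ((g1,g2),id) acts blockwise, and
  ((g1,g2),swap) sends Inl i to Inr (g1 i) and Inr i to Inl (g2 i).\<close>
definition wreath_S2 :: "('n \<Rightarrow> 'n) set \<Rightarrow> ('n + 'n \<Rightarrow> 'n + 'n) set" where
  "wreath_S2 G =
     {w. \<exists>g1\<in>G. \<exists>g2\<in>G. \<exists>h::bool.
        w = (\<lambda>x. case x of
               Inl i \<Rightarrow> (if h then Inr (g1 i) else Inl (g1 i))
             | Inr i \<Rightarrow> (if h then Inl (g2 i) else Inr (g2 i)))}"

end

theory Submission imports Defs begin

definition blk :: "real^'n^'n \<Rightarrow> real^'n^'n \<Rightarrow> real^'n^'n \<Rightarrow> real^'n^'n \<Rightarrow> real^('n+'n)^('n+'n)" where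
"blk A B C E = (\<chi> i j. case i of Inl a \<Rightarrow> (case j of Inl b \<Rightarrow> A$a$b | Inr b \<Rightarrow> B$a$b)
   | Inr a \<Rightarrow> (case j of Inl b \<Rightarrow> C$a$b | Inr b \<Rightarrow> E$a$b))"

lemma blk_nth[simp]:
  "blk A B C E $ Inl a $ Inl b = A$a$b" "blk A B C E $ Inl a $ Inr b = B$a$b"
  "blk A B C E $ Inr a $ Inl b = C$a$b" "blk A B C E $ Inr a $ Inr b = E$a$b"
  by (simp_all add: blk_def)

lemma blk_eq_iff: "blk A B C E = blk A' B' C' E' \<longleftrightarrow> A = A' \<and> B = B' \<and> C = C' \<and> E = E'"
proof
  assume h: "blk A B C E = blk A' B' C' E'"
  have "\<And>a b. A$a$b = A'$a$b \<and> B$a$b = B'$a$b \<and> C$a$b = C'$a$b \<and> E$a$b = E'$a$b"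
    by (metis blk_nth h)
  then show "A = A' \<and> B = B' \<and> C = C' \<and> E = E'" by (simp add: vec_eq_iff)
qed simp

lemma blk_add: "blk A B C E + blk A' B' C' E' = blk (A+A') (B+B') (C+C') (E+E')"
  by (simp add: vec_eq_iff blk_def split: sum.split)

lemma blk_scale: "c *\<^sub>R blk A B C E = blk (c *\<^sub>R A) (c *\<^sub>R B) (c *\<^sub>R C) (c *\<^sub>R E)"
  by (simp add: vec_eq_iff blk_def split: sum.split)

lemma ints_iff: "(\<forall>b\<in>Basis. (x::real^'m^'k) \<bullet> b \<in> \<int>) \<longleftrightarrow> (\<forall>i j. x$i$j \<in> \<int>)"
  by (auto simp: Basis_vec_def inner_axis)

lemma ints_blk: "(\<forall>i j. blk A B C E $i$j \<in> \<int>) \<longleftrightarrow>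
  (\<forall>i j. A$i$j \<in> \<int>) \<and> (\<forall>i j. B$i$j \<in> \<int>) \<and> (\<forall>i j. C$i$j \<in> \<int>) \<and> (\<forall>i j. E$i$j \<in> \<int>)"
proof
  assume h: "\<forall>i j. blk A B C E $i$j \<in> \<int>"
  have "A$a$b \<in> \<int>" "B$a$b \<in> \<int>" "C$a$b \<in> \<int>" "E$a$b \<in> \<int>" for a b
    using h[rule_format, of "Inl a" "Inl b"] h[rule_format, of "Inl a" "Inr b"]
      h[rule_format, of "Inr a" "Inl b"] h[rule_format, of "Inr a" "Inr b"] by simp_all
  then show "(\<forall>i j. A$i$j \<in> \<int>) \<and> (\<forall>i j. B$i$j \<in> \<int>) \<and> (\<forall>i j. C$i$j \<in> \<int>) \<and> (\<forall>i j. E$i$j \<in> \<int>)"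
    by blast
next
  assume h: "(\<forall>i j. A$i$j \<in> \<int>) \<and> (\<forall>i j. B$i$j \<in> \<int>) \<and> (\<forall>i j. C$i$j \<in> \<int>) \<and> (\<forall>i j. E$i$j \<in> \<int>)"
  show "\<forall>i j. blk A B C E $i$j \<in> \<int>"
  proof (intro allI)
    fix i j
    show "blk A B C E $i$j \<in> \<int>" using h by (cases i; cases j) simp_all
  qed
qed

lemma lin1: "linear (\<lambda>(A,E). blk A 0 0 E)"
  by (rule linearI) (auto simp: blk_add blk_scale)
lemma lin2: "linear (\<lambda>(B,C). blk 0 B C 0)"
  by (rule linearI) (auto simp: blk_add blk_scale)

lemma stoch:
  assumes "X \<in> perm_polytope G"
  shows "(\<Sum>j\<in>UNIV. X$i$j) = 1 \<and> 0 \<le> X$i$j \<and> X$i$j \<le> 1"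
proof -
  let ?C = "{X::real^'n^'n. \<forall>i. (\<Sum>j\<in>UNIV. X$i$j) = 1 \<and> (\<forall>j. 0 \<le> X$i$j \<and> X$i$j \<le> 1)}"
  have "convex ?C"
  proof (rule convexI)
    fix x y :: "real^'n^'n" and u v :: real
    assume "x \<in> ?C" "y \<in> ?C" "0 \<le> u" "0 \<le> v" "u + v = 1"
    then show "u *\<^sub>R x + v *\<^sub>R y \<in> ?C"
      by (auto simp: sum.distrib sum_distrib_left[symmetric] convex_bound_le)
  qed
  moreover have "perm_mat ` G \<subseteq> ?C"
    by (auto simp: perm_mat_def)
  ultimately have "perm_polytope G \<subseteq> ?C"
    unfolding perm_polytope_def by (rule hull_minimal[rotated])
  then show ?thesis using assms by blast
qed


lemma pm_wreath:
  "perm_mat ` wreath_S2 G =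
     (\<lambda>(A,E). blk A 0 0 E) ` (perm_mat ` G \<times> perm_mat ` G) \<union>
     (\<lambda>(B,C). blk 0 B C 0) ` (perm_mat ` G \<times> perm_mat ` G)"
proof -
  have f: "perm_mat (\<lambda>x. case x of Inl i \<Rightarrow> Inl (g1 i) | Inr i \<Rightarrow> Inr (g2 i)) = blk (perm_mat g1) 0 0 (perm_mat g2)"
    for g1 g2 :: "'a \<Rightarrow> 'a"
    by (simp add: vec_eq_iff blk_def perm_mat_def split: sum.split)
  have t: "perm_mat (\<lambda>x. case x of Inl i \<Rightarrow> Inr (g1 i) | Inr i \<Rightarrow> Inl (g2 i)) = blk 0 (perm_mat g1) (perm_mat g2) 0"
    for g1 g2 :: "'a \<Rightarrow> 'a"
    by (simp add: vec_eq_iff blk_def perm_mat_def split: sum.split)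
  show ?thesis
  proof (intro equalityI subsetI)
    fix y assume "y \<in> perm_mat ` wreath_S2 G"
    then obtain g1 g2 h where g: "g1 \<in> G" "g2 \<in> G" and y: "y = perm_mat (\<lambda>x. case x of
               Inl i \<Rightarrow> (if h then Inr (g1 i) else Inl (g1 i))
             | Inr i \<Rightarrow> (if h then Inl (g2 i) else Inr (g2 i)))"
      unfolding wreath_S2_def by blast
    show "y \<in> (\<lambda>(A,E). blk A 0 0 E) ` (perm_mat ` G \<times> perm_mat ` G) \<union>
     (\<lambda>(B,C). blk 0 B C 0) ` (perm_mat ` G \<times> perm_mat ` G)"
    proof (cases h)
      case True
      then have "(\<lambda>x. case x of
               Inl i \<Rightarrow> (if h then Inr (g1 i) else Inl (g1 i))
             | Inr i \<Rightarrow> (if h then Inl (g2 i) else Inr (g2 i))) = (\<lambda>x. case x of Inl i \<Rightarrow> Inr (g1 i) | Inr i \<Rightarrow> Inl (g2 i))"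
        by (auto split: sum.split)
      then have "y = perm_mat (\<lambda>x. case x of Inl i \<Rightarrow> Inr (g1 i) | Inr i \<Rightarrow> Inl (g2 i))" using y by simp
      then have "y = blk 0 (perm_mat g1) (perm_mat g2) 0" using t by simp
      then show ?thesis using g by (intro UnI2 image_eqI[where x="(perm_mat g1, perm_mat g2)"]) auto
    next
      case False
      then have "(\<lambda>x. case x of
               Inl i \<Rightarrow> (if h then Inr (g1 i) else Inl (g1 i))
             | Inr i \<Rightarrow> (if h then Inl (g2 i) else Inr (g2 i))) = (\<lambda>x. case x of Inl i \<Rightarrow> Inl (g1 i) | Inr i \<Rightarrow> Inr (g2 i))"
        by (auto split: sum.split)
      then have "y = blk (perm_mat g1) 0 0 (perm_mat g2)" using y f by simp
      then show ?thesis using g by (intro UnI1 image_eqI[where x="(perm_mat g1, perm_mat g2)"]) auto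
    qed
  next
    have mem: "(\<lambda>x. case x of
               Inl i \<Rightarrow> (if h then Inr (g1 i) else Inl (g1 i))
             | Inr i \<Rightarrow> (if h then Inl (g2 i) else Inr (g2 i))) \<in> wreath_S2 G"
      if "g1 \<in> G" "g2 \<in> G" for g1 g2 h
      unfolding wreath_S2_def mem_Collect_eq
      by (rule bexI[where x=g1], rule bexI[where x=g2], rule exI[where x=h], rule refl) (use that in auto)
    fix y assume "y \<in> (\<lambda>(A,E). blk A 0 0 E) ` (perm_mat ` G \<times> perm_mat ` G) \<union>
     (\<lambda>(B,C). blk 0 B C 0) ` (perm_mat ` G \<times> perm_mat ` G)"
    then show "y \<in> perm_mat ` wreath_S2 G"
    proof
      assume "y \<in> (\<lambda>(A,E). blk A 0 0 E) ` (perm_mat ` G \<times> perm_mat ` G)"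
      then obtain g1 g2 where g: "g1 \<in> G" "g2 \<in> G" and y: "y = blk (perm_mat g1) 0 0 (perm_mat g2)"
        by auto
      have e: "(\<lambda>x. case x of
               Inl i \<Rightarrow> (if False then Inr (g1 i) else Inl (g1 i))
             | Inr i \<Rightarrow> (if False then Inl (g2 i) else Inr (g2 i))) = (\<lambda>x. case x of Inl i \<Rightarrow> Inl (g1 i) | Inr i \<Rightarrow> Inr (g2 i))"
        by (auto split: sum.split)
      have "y = perm_mat (\<lambda>x. case x of
               Inl i \<Rightarrow> (if False then Inr (g1 i) else Inl (g1 i))
             | Inr i \<Rightarrow> (if False then Inl (g2 i) else Inr (g2 i)))" unfolding e f y ..
      then show ?thesis using mem[OF g, of False] by (rule image_eqI)
    next
      assume "y \<in> (\<lambda>(B,C). blk 0 B C 0) ` (perm_mat ` G \<times> perm_mat ` G)"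
      then obtain g1 g2 where g: "g1 \<in> G" "g2 \<in> G" and y: "y = blk 0 (perm_mat g1) (perm_mat g2) 0"
        by auto
      have e: "(\<lambda>x. case x of
               Inl i \<Rightarrow> (if True then Inr (g1 i) else Inl (g1 i))
             | Inr i \<Rightarrow> (if True then Inl (g2 i) else Inr (g2 i))) = (\<lambda>x. case x of Inl i \<Rightarrow> Inr (g1 i) | Inr i \<Rightarrow> Inl (g2 i))"
        by (auto split: sum.split)
      have "y = perm_mat (\<lambda>x. case x of
               Inl i \<Rightarrow> (if True then Inr (g1 i) else Inl (g1 i))
             | Inr i \<Rightarrow> (if True then Inl (g2 i) else Inr (g2 i)))" unfolding e t y ..
      then show ?thesis using mem[OF g, of True] by (rule image_eqI)
    qed
  qed
qed

lemma PW_char: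
  assumes "G \<noteq> {}"
  shows "x \<in> perm_polytope (wreath_S2 G) \<longleftrightarrow>
    (\<exists>u v p1 p2 q1 q2. u \<ge> 0 \<and> v \<ge> 0 \<and> u + v = 1 \<and> p1 \<in> perm_polytope G \<and> p2 \<in> perm_polytope G
       \<and> q1 \<in> perm_polytope G \<and> q2 \<in> perm_polytope G \<and>
       x = blk (u *\<^sub>R p1) (v *\<^sub>R q1) (v *\<^sub>R q2) (u *\<^sub>R p2))"
proof -
  let ?S = "perm_mat ` G" and ?P = "perm_polytope G"
  let ?f1 = "\<lambda>(A,E). blk A 0 0 E" and ?f2 = "\<lambda>(B,C). blk 0 B C 0"
  have h1: "convex hull (?f1 ` (?S \<times> ?S)) = ?f1 ` (?P \<times> ?P)"
    unfolding perm_polytope_def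
    using convex_hull_linear_image[OF lin1, of "?S \<times> ?S"] convex_hull_Times by metis
  have h2: "convex hull (?f2 ` (?S \<times> ?S)) = ?f2 ` (?P \<times> ?P)"
    unfolding perm_polytope_def
    using convex_hull_linear_image[OF lin2, of "?S \<times> ?S"] convex_hull_Times by metis
  have "perm_polytope (wreath_S2 G) = convex hull (?f1 ` (?P \<times> ?P) \<union> ?f2 ` (?P \<times> ?P))"
  proof -
    have "perm_polytope (wreath_S2 G) = convex hull (convex hull (?f1 ` (?S \<times> ?S)) \<union> convex hull (?f2 ` (?S \<times> ?S)))"
      unfolding perm_polytope_def pm_wreath by (rule hull_Un) (simp add: convex_Inter)
    then show ?thesis by (simp only: h1 h2)
  qed
  also have "\<dots> = {u *\<^sub>R s + v *\<^sub>R t | u v s t. u \<ge> 0 \<and> v \<ge> 0 \<and> u + v = 1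
      \<and> s \<in> ?f1 ` (?P \<times> ?P) \<and> t \<in> ?f2 ` (?P \<times> ?P)}"
  proof (rule convex_hull_union_two)
    show "convex (?f1 ` (?P \<times> ?P))" by (metis h1 convex_convex_hull)
    show "convex (?f2 ` (?P \<times> ?P))" by (metis h2 convex_convex_hull)
    show "?f1 ` (?P \<times> ?P) \<noteq> {}" "?f2 ` (?P \<times> ?P) \<noteq> {}"
      using assms by (auto simp: perm_polytope_def)
  qed
  finally have eq: "perm_polytope (wreath_S2 G) = \<dots>" .
  show ?thesis
  proof
    assume "x \<in> perm_polytope (wreath_S2 G)"
    then show "\<exists>u v p1 p2 q1 q2. u \<ge> 0 \<and> v \<ge> 0 \<and> u + v = 1 \<and> p1 \<in> ?P \<and> p2 \<in> ?P
       \<and> q1 \<in> ?P \<and> q2 \<in> ?P \<and> x = blk (u *\<^sub>R p1) (v *\<^sub>R q1) (v *\<^sub>R q2) (u *\<^sub>R p2)"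
      unfolding eq by (auto simp: blk_scale blk_add) metis
  next
    assume "\<exists>u v p1 p2 q1 q2. u \<ge> 0 \<and> v \<ge> 0 \<and> u + v = 1 \<and> p1 \<in> ?P \<and> p2 \<in> ?P
       \<and> q1 \<in> ?P \<and> q2 \<in> ?P \<and> x = blk (u *\<^sub>R p1) (v *\<^sub>R q1) (v *\<^sub>R q2) (u *\<^sub>R p2)"
    then obtain u v p1 p2 q1 q2 where h: "u \<ge> 0" "v \<ge> 0" "u + v = 1" "p1 \<in> ?P" "p2 \<in> ?P"
       "q1 \<in> ?P" "q2 \<in> ?P" "x = blk (u *\<^sub>R p1) (v *\<^sub>R q1) (v *\<^sub>R q2) (u *\<^sub>R p2)" by blast
    have "x = u *\<^sub>R blk p1 0 0 p2 + v *\<^sub>R blk 0 q1 q2 0" using h(8) by (simp add: blk_scale blk_add)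
    moreover have "blk p1 0 0 p2 \<in> ?f1 ` (?P \<times> ?P)" using h by force
    moreover have "blk 0 q1 q2 0 \<in> ?f2 ` (?P \<times> ?P)" using h by force
    ultimately show "x \<in> perm_polytope (wreath_S2 G)" unfolding eq using h by blast
  qed
qed


definition Lset :: "(real^'n^'n) set \<Rightarrow> nat \<Rightarrow> (real^'n^'n) set" where
  "Lset P k = {x \<in> (\<lambda>y. real k *\<^sub>R y) ` P. \<forall>b\<in>Basis. x \<bullet> b \<in> \<int>}"

lemma ehrhart_Lset: "ehrhart P k = card (Lset P k)"
  by (simp add: ehrhart_def Lset_def)

lemma Lset_iff: "A \<in> Lset P k \<longleftrightarrow> (\<exists>X\<in>P. A = real k *\<^sub>R X) \<and> (\<forall>i j. A$i$j \<in> \<int>)"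
  by (auto simp: Lset_def ints_iff)

lemma fin_vec: assumes "finite F" shows "finite {v::'a^'m::finite. \<forall>i. v$i \<in> F}"
proof -
  have "{v::'a^'m. \<forall>i. v$i \<in> F} \<subseteq> vec_lambda ` (PiE UNIV (\<lambda>_. F))"
  proof
    fix v :: "'a^'m" assume "v \<in> {v. \<forall>i. v$i \<in> F}"
    then have "(\<lambda>i. v$i) \<in> PiE UNIV (\<lambda>_. F)" by auto
    then show "v \<in> vec_lambda ` (PiE UNIV (\<lambda>_. F))" by (intro image_eqI[of _ _ "\<lambda>i. v$i"]) auto
  qed
  moreover have "finite (PiE (UNIV::'m set) (\<lambda>_. F))" using assms by (simp add: finite_PiE)
  ultimately show ?thesis by (meson finite_imageI finite_subset)
qed

lemma fin_mat: assumes "finite F" shows "finite {A::'a^'m::finite^'k::finite. \<forall>i j. A$i$j \<in> F}"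
proof -
  have "{A::'a^'m::finite^'k::finite. \<forall>i j. A$i$j \<in> F} = {A. \<forall>i. A$i \<in> {v. \<forall>j. v$j \<in> F}}" by auto
  then show ?thesis using fin_vec[OF fin_vec[OF assms]] by simp
qed

lemma Lset_finite: "finite (Lset (perm_polytope G) k)"
proof -
  have "Lset (perm_polytope G) k \<subseteq> {A. \<forall>i j. A$i$j \<in> {x\<in>\<int>. 0 \<le> x \<and> x \<le> real k}}"
  proof
    fix A assume "A \<in> Lset (perm_polytope G) k"
    then obtain X where X: "X \<in> perm_polytope G" "A = real k *\<^sub>R X" "\<forall>i j. A$i$j \<in> \<int>"
      by (auto simp: Lset_iff)
    have "0 \<le> A$i$j \<and> A$i$j \<le> real k" for i j
      using stoch[OF X(1), of i j] X(2) by (simp add: mult_left_le)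
    then show "A \<in> {A. \<forall>i j. A$i$j \<in> {x\<in>\<int>. 0 \<le> x \<and> x \<le> real k}}" using X(3) by auto
  qed
  then show ?thesis using fin_mat[OF finite_int_segment] finite_subset by blast
qed

lemma Lset_rowsum: "A \<in> Lset (perm_polytope G) k \<Longrightarrow> (\<Sum>j\<in>UNIV. A$i$j) = real k"
  using stoch[of _ G i] by (auto simp: Lset_iff sum_distrib_left[symmetric])

lemma Lset_disj: "k \<noteq> k' \<Longrightarrow> Lset (perm_polytope (G::('n::finite\<Rightarrow>'n) set)) k \<inter> Lset (perm_polytope G) k' = {}"
  using Lset_rowsum[of _ G k "undefined::'n"] Lset_rowsum[of _ G k' "undefined::'n"] by force


lemma main_set:
  fixes G :: "('n::finite \<Rightarrow> 'n) set"
  assumes G: "G \<noteq> {}" and t: "t > 0"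
  shows "Lset (perm_polytope (wreath_S2 G)) t =
    (\<lambda>((A1,A2),(B1,B2)). blk A1 B1 B2 A2) `
      (\<Union>k\<in>{0..t}. (Lset (perm_polytope G) k \<times> Lset (perm_polytope G) k) \<times>
                    (Lset (perm_polytope G) (t-k) \<times> Lset (perm_polytope G) (t-k)))"
  (is "?L = ?f ` ?U")
proof (intro equalityI subsetI)
  let ?P = "perm_polytope G"
  fix x assume "x \<in> ?L"
  then obtain y where y: "y \<in> perm_polytope (wreath_S2 G)" "x = real t *\<^sub>R y" and xi: "\<forall>i j. x$i$j \<in> \<int>"
    by (auto simp: Lset_iff)
  from y(1) obtain u v p1 p2 q1 q2 where h: "u \<ge> 0" "v \<ge> 0" "u + v = 1" "p1 \<in> ?P" "p2 \<in> ?P"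
       "q1 \<in> ?P" "q2 \<in> ?P" "y = blk (u *\<^sub>R p1) (v *\<^sub>R q1) (v *\<^sub>R q2) (u *\<^sub>R p2)"
    using PW_char[OF G] by blast
  define a where "a = real t * u"
  define b where "b = real t * v"
  have x: "x = blk (a *\<^sub>R p1) (b *\<^sub>R q1) (b *\<^sub>R q2) (a *\<^sub>R p2)"
    using y(2) h(8) by (simp add: blk_scale a_def b_def)
  have ints: "\<forall>i j. (a *\<^sub>R p1)$i$j \<in> \<int>" "\<forall>i j. (b *\<^sub>R q1)$i$j \<in> \<int>"
     "\<forall>i j. (b *\<^sub>R q2)$i$j \<in> \<int>" "\<forall>i j. (a *\<^sub>R p2)$i$j \<in> \<int>"
    using xi unfolding x ints_blk by blast+
  have "a = (\<Sum>j\<in>UNIV. (a *\<^sub>R p1)$(undefined::'n)$j)"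
    using stoch[OF h(4), of "undefined::'n"] by (simp add: sum_distrib_left[symmetric])
  also have "\<dots> \<in> \<int>" using ints(1) by (intro Ints_sum) blast
  finally have aZ: "a \<in> \<int>" .
  have a0: "a \<ge> 0" using h t by (simp add: a_def)
  define k where "k = nat \<lfloor>a\<rfloor>"
  have ak: "a = real k" using aZ a0 unfolding k_def
    by (metis Ints_cases floor_of_int of_int_0_le_iff of_nat_nat)
  have bt: "b = real t - a" using h(3) unfolding a_def b_def by (metis add_diff_cancel_left' distrib_left mult.right_neutral)
  have b0: "b \<ge> 0" using h t by (simp add: b_def)
  have kt: "k \<le> t" using ak bt b0 by simp
  have bk: "b = real (t - k)" using ak bt kt by simp
  have "a *\<^sub>R p1 \<in> Lset ?P k" "a *\<^sub>R p2 \<in> Lset ?P k"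
    using ints h ak by (auto simp: Lset_iff)
  moreover have "b *\<^sub>R q1 \<in> Lset ?P (t-k)" "b *\<^sub>R q2 \<in> Lset ?P (t-k)"
    using ints h bk by (auto simp: Lset_iff)
  ultimately have "((a *\<^sub>R p1, a *\<^sub>R p2), (b *\<^sub>R q1, b *\<^sub>R q2)) \<in> ?U" using kt by auto
  then show "x \<in> ?f ` ?U" unfolding x by (rule rev_image_eqI) simp
next
  let ?P = "perm_polytope G"
  fix x assume "x \<in> ?f ` ?U"
  then obtain k A1 A2 B1 B2 where k: "k \<le> t" and A: "A1 \<in> Lset ?P k" "A2 \<in> Lset ?P k"
     "B1 \<in> Lset ?P (t-k)" "B2 \<in> Lset ?P (t-k)" and x: "x = blk A1 B1 B2 A2"
    by auto
  from A obtain p1 p2 q1 q2 where p: "p1 \<in> ?P" "p2 \<in> ?P" "q1 \<in> ?P" "q2 \<in> ?P"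
    "A1 = real k *\<^sub>R p1" "A2 = real k *\<^sub>R p2" "B1 = real (t-k) *\<^sub>R q1" "B2 = real (t-k) *\<^sub>R q2"
    by (auto simp: Lset_iff)
  define u where "u = real k / real t"
  define v where "v = real (t-k) / real t"
  have uv: "u \<ge> 0" "v \<ge> 0" "u + v = 1" using t k
    by (auto simp: u_def v_def field_simps of_nat_diff)
  have tu: "real t * u = real k" "real t * v = real (t-k)" using t by (auto simp: u_def v_def)
  have "blk (u *\<^sub>R p1) (v *\<^sub>R q1) (v *\<^sub>R q2) (u *\<^sub>R p2) \<in> perm_polytope (wreath_S2 G)"
    using PW_char[OF G] uv p by blast
  moreover have "x = real t *\<^sub>R blk (u *\<^sub>R p1) (v *\<^sub>R q1) (v *\<^sub>R q2) (u *\<^sub>R p2)"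
    unfolding x p blk_scale scaleR_scaleR tu ..
  moreover have "\<forall>i j. x$i$j \<in> \<int>" unfolding x ints_blk using A by (auto simp: Lset_iff)
  ultimately show "x \<in> ?L" by (auto simp: Lset_iff)
qed


theorem theorem3:
  fixes G :: "('n::finite \<Rightarrow> 'n) set" and t :: nat
  assumes "subgroup G (BijGroup (UNIV :: 'n set))"
    and "t \<ge> 2"
  shows "ehrhart (perm_polytope (wreath_S2 G)) t =
           (\<Sum>k = 0..t. (ehrhart (perm_polytope G) k)\<^sup>2 * (ehrhart (perm_polytope G) (t - k))\<^sup>2)"
proof -
  let ?P = "perm_polytope G"
  let ?f = "\<lambda>((A1,A2),(B1,B2)). blk A1 B1 B2 A2"
  let ?S = "\<lambda>k. (Lset ?P k \<times> Lset ?P k) \<times> (Lset ?P (t-k) \<times> Lset ?P (t-k))"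
  have G: "G \<noteq> {}" using subgroup.one_closed[OF assms(1)] by blast
  have t: "t > 0" using assms(2) by simp
  have inj: "inj_on ?f (\<Union>k\<in>{0..t}. ?S k)"
    by (rule inj_onI) (auto simp: blk_eq_iff)
  have fin: "finite (?S k)" for k using Lset_finite by blast
  have disj: "?S k \<inter> ?S k' = {}" if "k \<noteq> k'" for k k'
    using Lset_disj[OF that, of G] by blast
  have "ehrhart (perm_polytope (wreath_S2 G)) t = card (?f ` (\<Union>k\<in>{0..t}. ?S k))"
    unfolding ehrhart_Lset main_set[OF G t] ..
  also have "\<dots> = card (\<Union>k\<in>{0..t}. ?S k)" using inj by (rule card_image)
  also have "\<dots> = (\<Sum>k = 0..t. card (?S k))"
    by (rule card_UN_disjoint) (auto intro: fin dest: disj)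
  also have "\<dots> = (\<Sum>k = 0..t. (ehrhart ?P k)\<^sup>2 * (ehrhart ?P (t - k))\<^sup>2)"
    by (simp add: ehrhart_Lset card_cartesian_product power2_eq_square)
  finally show ?thesis .
qed

end
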